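(* Let $P\subseteq\mathbb{R}^d$ be finite. Suppose there is a point $\mathbf{p}=(p_1,\dots,p_d)\in P$ such that for each $i\in\{1,\dots,d\}$ either $p_i=\max\{q_i:\mathbf{q}\in P\}$ or $p_i=\min\{q_i:\mathbf{q}\in P\}$. Then $\mathbf{p}$ is a leaf node in every optimal Steiner tree of $P$.
   Context: For a finite set $P\subset\mathbb{R}^d$ (the terminals), a Steiner tree of $P$ is a tree whose vertex set is $P\cup S$ for some finite $S\subset\mathbb{R}^d$ (the Steiner points), with edge lengths the Euclidean distances between endpoints; its cost is the total edge length. An optimal Steiner tree is one of minimum cost. By convention, optimal Steiner trees contain no trivial Steiner points (Steiner points of degree $2$ that merely subdivide a straight segment). *)

theory Defs
  imports "HOL-Analysis.Analysis"
begin

definition graph_edges :: "'a set \<Rightarrow> 'a set set \<Rightarrow> bool" where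
  "graph_edges V E \<longleftrightarrow> (\<forall>e\<in>E. \<exists>x y. e = {x, y} \<and> x \<in> V \<and> y \<in> V \<and> x \<noteq> y)"

definition connected_in :: "'a set set \<Rightarrow> 'a \<Rightarrow> 'a \<Rightarrow> bool" where
  "connected_in E u v \<longleftrightarrow> (u, v) \<in> {(x, y). {x, y} \<in> E}\<^sup>*"

text \<open>A tree: finite, nonempty, connected, and acyclic (every edge is a bridge,
  i.e. its endpoints are disconnected once the edge is removed).\<close>
definition is_tree :: "'a set \<Rightarrow> 'a set set \<Rightarrow> bool" where
  "is_tree V E \<longleftrightarrow> finite V \<and> V \<noteq> {} \<and> graph_edges V E
     \<and> (\<forall>u\<in>V. \<forall>v\<in>V. connected_in E u v)
     \<and> (\<forall>x y. {x, y} \<in> E \<longrightarrow> \<not> connected_in (E - {{x, y}}) x y)"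

definition degree :: "'a set set \<Rightarrow> 'a \<Rightarrow> nat" where
  "degree E v = card {e \<in> E. v \<in> e}"

definition edge_length :: "('a::metric_space) set \<Rightarrow> real" where
  "edge_length e = (THE l. \<exists>x y. e = {x, y} \<and> l = dist x y)"

definition tree_cost :: "('a::metric_space) set set \<Rightarrow> real" where
  "tree_cost E = (\<Sum>e\<in>E. edge_length e)"

text \<open>A Steiner tree of \<open>P\<close>: a tree whose vertex set is \<open>P \<union> S\<close> for a finite
  set \<open>S\<close> of Steiner points (here: the finite vertex set \<open>V \<supseteq> P\<close>, \<open>S = V - P\<close>).\<close>
definition steiner_tree :: "('a::metric_space) set \<Rightarrow> 'a set \<Rightarrow> 'a set set \<Rightarrow> bool" where
  "steiner_tree P V E \<longleftrightarrow> P \<subseteq> V \<and> is_tree V E"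

definition trivial_steiner_point ::
  "('a::real_normed_vector) set \<Rightarrow> 'a set \<Rightarrow> 'a set set \<Rightarrow> 'a \<Rightarrow> bool" where
  "trivial_steiner_point P V E v \<longleftrightarrow> v \<in> V - P \<and> degree E v = 2 \<and>
     (\<exists>x y. {x, v} \<in> E \<and> {y, v} \<in> E \<and> x \<noteq> y \<and> v \<in> closed_segment x y)"

definition optimal_steiner_tree ::
  "('a::real_normed_vector) set \<Rightarrow> 'a set \<Rightarrow> 'a set set \<Rightarrow> bool" where
  "optimal_steiner_tree P V E \<longleftrightarrow> steiner_tree P V E
     \<and> (\<forall>V' E'. steiner_tree P V' E' \<longrightarrow> tree_cost E \<le> tree_cost E')
     \<and> (\<forall>v. \<not> trivial_steiner_point P V E v)"

end

theory Submission
  imports Defs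
begin


lemma edge_length_2: "edge_length {x, y} = dist x y"
  unfolding edge_length_def
proof (rule the_equality)
  show "\<exists>a b. {x, y} = {a, b} \<and> dist x y = dist a b" by blast
next
  fix l assume "\<exists>a b. {x, y} = {a, b} \<and> l = dist a b"
  then obtain a b where "{x,y} = {a,b}" "l = dist a b" by blast
  then show "l = dist x y" by (auto simp: doubleton_eq_iff dist_commute)
qed

lemma connected_sym: "connected_in E u v \<Longrightarrow> connected_in E v u"
  unfolding connected_in_def
proof (induction rule: rtrancl_induct)
  case base then show ?case by simp
next
  case (step y z)
  then have "(z, y) \<in> {(x, y). {x, y} \<in> E}" by (simp add: insert_commute)
  then show ?case using step.IH by (meson converse_rtrancl_into_rtrancl)
qed

lemma connected_trans: "connected_in E u v \<Longrightarrow> connected_in E v w \<Longrightarrow> connected_in E u w"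
  unfolding connected_in_def by (rule rtrancl_trans)

lemma connected_edge: "{u, v} \<in> E \<Longrightarrow> connected_in E u v"
  unfolding connected_in_def by auto

lemma connected_refl: "connected_in E u u"
  unfolding connected_in_def by auto

lemma connected_reroute:
  assumes "connected_in E u v" "connected_in (E - {{x, y}}) x y"
  shows "connected_in (E - {{x, y}}) u v"
  using assms(1) unfolding connected_in_def
proof (induction rule: rtrancl_induct)
  case base then show ?case by simp
next
  case (step w z)
  have "connected_in (E - {{x, y}}) w z"
  proof (cases "{w, z} = {x, y}")
    case True
    then have "(w = x \<and> z = y) \<or> (w = y \<and> z = x)" by (auto simp: doubleton_eq_iff)
    then show ?thesis using assms(2) connected_sym[OF assms(2)] by auto
  next
    case False
    then show ?thesis using step.hyps(2) by (intro connected_edge) auto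
  qed
  then show ?case using rtrancl_trans[OF step.IH] unfolding connected_in_def by blast
qed

lemma spanning_tree:
  assumes "finite E" "finite V" "V \<noteq> {}" "graph_edges V E"
    "\<forall>u\<in>V. \<forall>v\<in>V. connected_in E u v"
  shows "\<exists>E'\<subseteq>E. is_tree V E'"
  using assms
proof (induction E rule: finite_psubset_induct)
  case (psubset E)
  show ?case
  proof (cases "\<forall>x y. {x, y} \<in> E \<longrightarrow> \<not> connected_in (E - {{x, y}}) x y")
    case True
    then have "is_tree V E" using psubset.prems unfolding is_tree_def by blast
    then show ?thesis by blast
  next
    case False
    then obtain x y where xy: "{x, y} \<in> E" "connected_in (E - {{x, y}}) x y" by blast
    let ?E1 = "E - {{x, y}}"
    have ps: "?E1 \<subset> E" using xy(1) by blast
    have ge1: "graph_edges V ?E1" unfolding graph_edges_def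
    proof
      fix e assume "e \<in> ?E1"
      then have "e \<in> E" by simp
      then show "\<exists>x y. e = {x, y} \<and> x \<in> V \<and> y \<in> V \<and> x \<noteq> y"
        using bspec[OF psubset.prems(3)[unfolded graph_edges_def]] by simp
    qed
    have cn1: "\<forall>u\<in>V. \<forall>v\<in>V. connected_in ?E1 u v"
    proof (intro ballI)
      fix u v assume "u \<in> V" "v \<in> V"
      then have "connected_in E u v" using psubset.prems(4) by simp
      then show "connected_in ?E1 u v" by (rule connected_reroute[OF _ xy(2)])
    qed
    obtain E' where "E' \<subseteq> ?E1" "is_tree V E'"
      using psubset.IH[OF ps psubset.prems(1,2) ge1 cn1] by blast
    then show ?thesis by blast
  qed
qed

lemma steiner_gain:
  fixes u v :: "'a::real_inner"
  assumes "u \<noteq> 0" "v \<noteq> 0" "inner u v \<ge> 0"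
  shows "\<exists>z. norm z + norm (z - u) + norm (z - v) < norm u + norm v"
proof -
  define r where "r = min (norm u) (norm v)"
  have r0: "r > 0" using assms by (simp add: r_def)
  define e1 where "e1 = (1 / norm u) *\<^sub>R u"
  define e2 where "e2 = (1 / norm v) *\<^sub>R v"
  have n1: "inner e1 e1 = 1" using assms by (simp add: e1_def power2_norm_eq_inner[symmetric] power2_eq_square)
  have n2: "inner e2 e2 = 1" using assms by (simp add: e2_def power2_norm_eq_inner[symmetric] power2_eq_square)
  have c0: "inner e1 e2 \<ge> 0" using assms by (simp add: e1_def e2_def)
  have c1: "inner e1 e2 \<le> 1"
  proof -
    have "inner e1 e2 \<le> norm e1 * norm e2" by (rule norm_cauchy_schwarz)
    moreover have "norm e1 = 1" "norm e2 = 1" using n1 n2 by (simp_all add: norm_eq_1)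
    ultimately show ?thesis by simp
  qed
  define k where "k = 1 + inner e1 e2"
  have k1: "k \<ge> 1" "k \<le> 2" using c0 c1 by (simp_all add: k_def)
  define w where "w = e1 + e2"
  define z0 where "z0 = (1/4) *\<^sub>R w"
  have w2: "norm w ^ 2 = 2 * k"
    by (simp add: w_def k_def power2_norm_eq_inner inner_add_left inner_add_right inner_commute n1 n2)
  have a2: "norm (z0 - e1) ^ 2 = 1 - 3 * k / 8"
    by (simp add: z0_def w_def k_def power2_norm_eq_inner inner_add_left inner_add_right inner_diff_left inner_diff_right inner_commute n1 n2 algebra_simps) (simp add: field_simps)
  have b2: "norm (z0 - e2) ^ 2 = 1 - 3 * k / 8"
    by (simp add: z0_def w_def k_def power2_norm_eq_inner inner_add_left inner_add_right inner_diff_left inner_diff_right inner_commute n1 n2 algebra_simps) (simp add: field_simps)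
  have wl: "norm w < 3 * k / 2"
  proof (rule power2_less_imp_less)
    have "2 * k < (3 * k / 2) ^ 2" proof -
      have "2 * k < 9 * k * k / 4" proof -
        have "k * 1 \<le> k * k" using k1 by (intro mult_left_mono) auto
        then show ?thesis using k1 by simp
      qed
      then show ?thesis by (simp add: power2_eq_square)
    qed
    then show "norm w ^ 2 < (3 * k / 2) ^ 2" using w2 by simp
    show "0 \<le> 3 * k / 2" using k1 by simp
  qed
  have al: "norm (z0 - e1) \<le> 1 - 3 * k / 16"
  proof (rule power2_le_imp_le)
    show "norm (z0 - e1) ^ 2 \<le> (1 - 3 * k / 16) ^ 2" proof -
      have "(1 - 3 * k / 16) ^ 2 = 1 - 3 * k / 8 + 9 * (k * k) / 256" by (simp add: power2_eq_square field_simps)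
      moreover have "0 \<le> k * k" by simp
      ultimately show ?thesis using a2 by linarith
    qed
    show "0 \<le> 1 - 3 * k / 16" using k1 by simp
  qed
  have bl: "norm (z0 - e2) \<le> 1 - 3 * k / 16"
  proof (rule power2_le_imp_le)
    show "norm (z0 - e2) ^ 2 \<le> (1 - 3 * k / 16) ^ 2" proof -
      have "(1 - 3 * k / 16) ^ 2 = 1 - 3 * k / 8 + 9 * (k * k) / 256" by (simp add: power2_eq_square field_simps)
      moreover have "0 \<le> k * k" by simp
      ultimately show ?thesis using b2 by linarith
    qed
    show "0 \<le> 1 - 3 * k / 16" using k1 by simp
  qed
  have key: "norm z0 + norm (z0 - e1) + norm (z0 - e2) < 2"
    using wl al bl by (simp add: z0_def)
  have ru: "norm (r *\<^sub>R e1 - u) = norm u - r"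
  proof -
    have "r *\<^sub>R e1 - u = (r / norm u - 1) *\<^sub>R u" using assms by (simp add: e1_def algebra_simps)
    moreover have "r / norm u \<le> 1" using assms by (simp add: r_def)
    ultimately have "norm (r *\<^sub>R e1 - u) = (1 - r / norm u) * norm u" by simp
    also have "\<dots> = norm u - r" using assms by (simp add: field_simps)
    finally show ?thesis .
  qed
  have rv: "norm (r *\<^sub>R e2 - v) = norm v - r"
  proof -
    have "r *\<^sub>R e2 - v = (r / norm v - 1) *\<^sub>R v" using assms by (simp add: e2_def algebra_simps)
    moreover have "r / norm v \<le> 1" using assms by (simp add: r_def)
    ultimately have "norm (r *\<^sub>R e2 - v) = (1 - r / norm v) * norm v" by simp
    also have "\<dots> = norm v - r" using assms by (simp add: field_simps)
    finally show ?thesis .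
  qed
  define z where "z = r *\<^sub>R z0"
  have "norm (z - u) \<le> norm (z - r *\<^sub>R e1) + norm (r *\<^sub>R e1 - u)"
    using norm_triangle_ineq[of "z - r *\<^sub>R e1" "r *\<^sub>R e1 - u"] by simp
  also have "\<dots> = r * norm (z0 - e1) + (norm u - r)"
  proof -
    have "z - r *\<^sub>R e1 = r *\<^sub>R (z0 - e1)" by (simp add: z_def scaleR_diff_right)
    then have "norm (z - r *\<^sub>R e1) = r * norm (z0 - e1)" using r0 by simp
    then show ?thesis using ru by simp
  qed
  finally have zu: "norm (z - u) \<le> r * norm (z0 - e1) + (norm u - r)" .
  have "norm (z - v) \<le> norm (z - r *\<^sub>R e2) + norm (r *\<^sub>R e2 - v)"
    using norm_triangle_ineq[of "z - r *\<^sub>R e2" "r *\<^sub>R e2 - v"] by simp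
  also have "\<dots> = r * norm (z0 - e2) + (norm v - r)"
  proof -
    have "z - r *\<^sub>R e2 = r *\<^sub>R (z0 - e2)" by (simp add: z_def scaleR_diff_right)
    then have "norm (z - r *\<^sub>R e2) = r * norm (z0 - e2)" using r0 by simp
    then show ?thesis using rv by simp
  qed
  finally have zv: "norm (z - v) \<le> r * norm (z0 - e2) + (norm v - r)" .
  have "norm z = r * norm z0" using r0 by (simp add: z_def)
  moreover have "r * (norm z0 + norm (z0 - e1) + norm (z0 - e2)) < r * 2"
    using key r0 by simp
  ultimately have "norm z + norm (z - u) + norm (z - v) < norm u + norm v"
    using zu zv by (simp add: algebra_simps)
  then show ?thesis by blast
qed




lemma clamp_lip: "\<bar>max l (min h (a::real)) - max l (min h b)\<bar> \<le> \<bar>a - b\<bar>"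
  by (auto simp: max_def min_def abs_if)

lemma sum_insert_le: "finite A \<Longrightarrow> 0 \<le> f x \<Longrightarrow> sum f (insert x A) \<le> f x + (sum f A :: real)"
  by (simp add: sum.insert_if)

theorem mainTheorem4:
  fixes P :: "(real ^ 'd) set" and p :: "real ^ 'd"
  assumes "finite P" and "card P \<ge> 2" and "p \<in> P"
    and "\<forall>i. p $ i = Max ((\<lambda>q. q $ i) ` P) \<or> p $ i = Min ((\<lambda>q. q $ i) ` P)"
  shows "\<forall>V E. optimal_steiner_tree P V E \<longrightarrow> degree E p = 1"
proof (intro allI impI)
  fix V E assume opt: "optimal_steiner_tree P V E"
  have PV: "P \<subseteq> V" and tree: "is_tree V E"
    using opt unfolding optimal_steiner_tree_def steiner_tree_def by auto
  have minimal: "\<And>V' E'. steiner_tree P V' E' \<Longrightarrow> tree_cost E \<le> tree_cost E'"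
    using opt unfolding optimal_steiner_tree_def by auto
  have finV: "finite V" and ge: "graph_edges V E" and conn: "\<forall>u\<in>V. \<forall>v\<in>V. connected_in E u v"
    using tree unfolding is_tree_def by auto
  have EPow: "E \<subseteq> Pow V" using ge unfolding graph_edges_def by auto
  have finE: "finite E" using finV EPow by (meson finite_Pow_iff finite_subset)
  have pV: "p \<in> V" using PV assms(3) by auto
  define A where "A = {e \<in> E. p \<in> e}"
  have finA: "finite A" using finE by (simp add: A_def)
  have edge_form: "\<exists>a. e = {p, a} \<and> a \<in> V \<and> a \<noteq> p" if "e \<in> A" for e
  proof -
    from that have "e \<in> E" "p \<in> e" by (auto simp: A_def)
    then obtain x y where "e = {x, y}" "x \<in> V" "y \<in> V" "x \<noteq> y" using ge unfolding graph_edges_def by blast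
    then show ?thesis using \<open>p \<in> e\<close> by (auto simp: insert_commute)
  qed
  obtain q where q: "q \<in> P" "q \<noteq> p"
  proof -
    have "P - {p} \<noteq> {}"
    proof
      assume "P - {p} = {}"
      then have "P \<subseteq> {p}" by auto
      then have "card P \<le> 1" using card_mono[of "{p}" P] by simp
      then show False using assms(2) by simp
    qed
    then show ?thesis using that by blast
  qed
  have "A \<noteq> {}"
  proof -
    have "(p, q) \<in> {(x, y). {x, y} \<in> E}\<^sup>*" using conn pV PV q unfolding connected_in_def by blast
    then obtain y where "(p, y) \<in> {(x, y). {x, y} \<in> E}" using q(2) by (cases rule: converse_rtranclE) auto
    then show ?thesis by (auto simp: A_def)
  qed
  then have deg1: "degree E p \<ge> 1" using finA unfolding degree_def A_def[symmetric]
    by (simp add: Suc_leI card_gt_0_iff)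
  have "\<not> degree E p \<ge> 2"
  proof
    assume "degree E p \<ge> 2"
    then have "card A \<ge> 2" by (simp add: degree_def A_def)
    then obtain e1 e2 where e12: "e1 \<in> A" "e2 \<in> A" "e1 \<noteq> e2"
    proof -
      have "\<not> (\<forall>e1\<in>A. \<forall>e2\<in>A. e1 = e2)"
      proof
        assume "\<forall>e1\<in>A. \<forall>e2\<in>A. e1 = e2"
        then have "card A \<le> 1" using card_le_Suc0_iff_eq[OF finA] by simp
        then show False using \<open>card A \<ge> 2\<close> by simp
      qed
      then show ?thesis using that by blast
    qed
    obtain a where a: "e1 = {p, a}" "a \<in> V" "a \<noteq> p" using edge_form e12(1) by blast
    obtain b where b: "e2 = {p, b}" "b \<in> V" "b \<noteq> p" using edge_form e12(2) by blast
    have paE: "{p, a} \<in> E" and pbE: "{p, b} \<in> E" using e12 a b by (auto simp: A_def)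
    have ab: "{p, a} \<noteq> {p, b}" using e12 a b by simp
    show False
    proof -
      define lo where "lo i = Min ((\<lambda>q. q $ i) ` P)" for i
      define hi where "hi i = Max ((\<lambda>q. q $ i) ` P)" for i
      define cl where "cl x = (\<chi> i. max (lo i) (min (hi i) (x $ i)))" for x :: "real ^ 'd"
      have lohi: "lo i \<le> q $ i \<and> q $ i \<le> hi i" if "q \<in> P" for q i
        using that assms(1) by (auto simp: lo_def hi_def intro!: Min_le Max_ge)
      have lole: "lo i \<le> hi i" for i using lohi[OF assms(3)] by (meson order_trans)
      have clP: "cl q = q" if "q \<in> P" for q
      proof -
        have "max (lo i) (min (hi i) (q $ i)) = q $ i" for i using lohi[OF that, of i] by simp
        then show ?thesis by (simp add: cl_def vec_eq_iff)
      qed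
      have cldist: "dist (cl x) (cl y) \<le> dist x y" for x y
        unfolding dist_vec_def
        by (rule L2_set_mono) (auto simp: cl_def dist_real_def clamp_lip)
      have clinner: "0 \<le> inner (cl x - p) (cl y - p)" for x y
        unfolding inner_vec_def
      proof (rule sum_nonneg)
        fix i :: 'd
        have ci: "cl w $ i = max (lo i) (min (hi i) (w $ i))" for w by (simp add: cl_def)
        show "0 \<le> inner ((cl x - p) $ i) ((cl y - p) $ i)"
        proof (cases "p $ i = hi i")
          case True
          have "cl x $ i \<le> hi i" "cl y $ i \<le> hi i" using lole[of i] by (auto simp: ci)
          then show ?thesis using True by (simp add: mult_nonpos_nonpos)
        next
          case False
          then have "p $ i = lo i" using assms(4) by (auto simp: lo_def hi_def)
          moreover have "lo i \<le> cl x $ i" "lo i \<le> cl y $ i" by (auto simp: ci)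
          ultimately show ?thesis by simp
        qed
      qed
      have cp: "cl p = p" using clP assms(3) by simp
      define u where "u = cl a - p"
      define v where "v = cl b - p"
      have nu: "norm u \<le> dist p a"
      proof -
        have "norm u = dist (cl a) (cl p)" by (simp add: u_def cp dist_norm)
        also have "\<dots> \<le> dist a p" by (rule cldist)
        also have "\<dots> = dist p a" by (rule dist_commute)
        finally show ?thesis .
      qed
      have nv: "norm v \<le> dist p b"
      proof -
        have "norm v = dist (cl b) (cl p)" by (simp add: v_def cp dist_norm)
        also have "\<dots> \<le> dist b p" by (rule cldist)
        also have "\<dots> = dist p b" by (rule dist_commute)
        finally show ?thesis .
      qed
      have da: "dist p a > 0" using a by simp
      have db: "dist p b > 0" using b by simp
      obtain z where z: "norm z + norm (z - u) + norm (z - v) < dist p a + dist p b"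
      proof (cases "u = 0 \<or> v = 0")
        case True
        have "norm u + norm v < dist p a + dist p b"
          using True
        proof
          assume "u = 0" then have "norm u = 0" by simp
          then show ?thesis using nv da by linarith
        next
          assume "v = 0" then have "norm v = 0" by simp
          then show ?thesis using nu db by linarith
        qed
        then have "norm (0::real^'d) + norm (0 - u) + norm (0 - v) < dist p a + dist p b"
          by simp
        then show ?thesis using that by blast
      next
        case False
        then have "u \<noteq> 0" "v \<noteq> 0" by auto
        moreover have "0 \<le> inner u v" unfolding u_def v_def by (rule clinner)
        ultimately obtain z where "norm z + norm (z - u) + norm (z - v) < norm u + norm v"
          using steiner_gain[of u v] by blast
        then have "norm z + norm (z - u) + norm (z - v) < dist p a + dist p b" using nu nv by linarith
        then show ?thesis by (rule that)
      qed
      define s where "s = p + z"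
      have ds1: "dist p s = norm z" by (simp add: s_def dist_norm)
      have ds2: "dist s (cl a) = norm (z - u)" by (simp add: s_def u_def dist_norm algebra_simps)
      have ds3: "dist s (cl b) = norm (z - v)" by (simp add: s_def v_def dist_norm algebra_simps)
      define V2 where "V2 = cl ` V \<union> {s}"
      define E0 where "E0 = E - {{p, a}, {p, b}}"
      define E1 where "E1 = (\<lambda>e. cl ` e) ` E0 \<union> {{p, s}, {s, cl a}, {s, cl b}}"
      define E2 where "E2 = {e \<in> E1. card e = 2}"
      have pV2: "p \<in> V2" using pV cp unfolding V2_def by (metis UnI1 image_eqI)
      have E0form: "\<exists>x y. e = {x, y} \<and> x \<in> V \<and> y \<in> V" if "e \<in> E0" for e
        using that ge unfolding E0_def graph_edges_def by blast
      have E1form: "\<exists>x y. e = {x, y} \<and> x \<in> V2 \<and> y \<in> V2" if "e \<in> E1" for e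
      proof (cases "e \<in> (\<lambda>e. cl ` e) ` E0")
        case True
        then obtain e0 where "e0 \<in> E0" "e = cl ` e0" by blast
        then obtain x y where "e0 = {x, y}" "x \<in> V" "y \<in> V" using E0form by blast
        then show ?thesis using \<open>e = cl ` e0\<close> unfolding V2_def by auto
      next
        case False
        then have "e \<in> {{p, s}, {s, cl a}, {s, cl b}}" using that unfolding E1_def by blast
        then show ?thesis using pV2 a(2) b(2) unfolding V2_def by auto
      qed
      have ge2: "graph_edges V2 E2"
        unfolding graph_edges_def
      proof
        fix e assume "e \<in> E2"
        then have "e \<in> E1" "card e = 2" by (auto simp: E2_def)
        then obtain x y where "e = {x, y}" "x \<in> V2" "y \<in> V2" using E1form by blast
        moreover have "x \<noteq> y" using \<open>card e = 2\<close> \<open>e = {x, y}\<close> by auto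
        ultimately show "\<exists>x y. e = {x, y} \<and> x \<in> V2 \<and> y \<in> V2 \<and> x \<noteq> y" by blast
      qed
      have c2: "connected_in E2 x y" if "{x, y} \<in> E1" for x y
      proof (cases "x = y")
        case True then show ?thesis by (simp add: connected_refl)
      next
        case False
        then have "{x, y} \<in> E2" using that by (simp add: E2_def)
        then show ?thesis by (rule connected_edge)
      qed
      have cpa: "connected_in E2 p (cl a)"
        using connected_trans[OF c2[of p s] c2[of s "cl a"]] unfolding E1_def by blast
      have cpb: "connected_in E2 p (cl b)"
        using connected_trans[OF c2[of p s] c2[of s "cl b"]] unfolding E1_def by blast
      have cedge: "connected_in E2 (cl x) (cl y)" if "{x, y} \<in> E" for x y
      proof (cases "{x, y} \<in> E0")
        case True
        then have "cl ` {x, y} \<in> (\<lambda>e. cl ` e) ` E0" by (rule imageI)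
        then have "{cl x, cl y} \<in> E1" unfolding E1_def by simp
        then show ?thesis by (rule c2)
      next
        case False
        then have "{x, y} = {p, a} \<or> {x, y} = {p, b}" using that unfolding E0_def by blast
        then have "(x = p \<and> y = a) \<or> (x = a \<and> y = p) \<or> (x = p \<and> y = b) \<or> (x = b \<and> y = p)"
          by (auto simp: doubleton_eq_iff)
        then show ?thesis using cpa cpb cp connected_sym[OF cpa] connected_sym[OF cpb] by auto
      qed
      have cE: "connected_in E2 p (cl w)" if "connected_in E p w" for w
        using that unfolding connected_in_def
      proof (induction rule: rtrancl_induct)
        case base then show ?case using cp by simp
      next
        case (step y w)
        then have "connected_in E2 (cl y) (cl w)" using cedge by simp
        then show ?case using connected_trans[OF step.IH[folded connected_in_def]] unfolding connected_in_def by blast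
      qed
      have cV2: "connected_in E2 p w" if wV2: "w \<in> V2" for w
      proof (cases "w = s")
        case True then show ?thesis using c2[of p s] unfolding E1_def by simp
      next
        case False
        then obtain x where "x \<in> V" "w = cl x" using wV2 unfolding V2_def by blast
        then show ?thesis using cE conn pV by blast
      qed
      have conn2: "\<forall>x\<in>V2. \<forall>y\<in>V2. connected_in E2 x y"
        using connected_trans[OF connected_sym[OF cV2] cV2] by blast
      have finE0: "finite E0" using finE by (simp add: E0_def)
      have finE1: "finite E1" using finE0 by (simp add: E1_def)
      have finE2: "finite E2" using finE1 by (simp add: E2_def)
      have finV2: "finite V2" using finV by (simp add: V2_def)
      obtain E3 where E3: "E3 \<subseteq> E2" "is_tree V2 E3"
        using spanning_tree[OF finE2 finV2 _ ge2 conn2] pV2 by blast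
      have PV2: "P \<subseteq> V2"
      proof
        fix q assume "q \<in> P"
        then have "q = cl q" "q \<in> V" using clP PV by auto
        then show "q \<in> V2" unfolding V2_def by blast
      qed
      have "steiner_tree P V2 E3" using E3 PV2 by (simp add: steiner_tree_def)
      then have ineq: "tree_cost E \<le> tree_cost E3" by (rule minimal)
      have nn1: "0 \<le> edge_length e" if eE1: "e \<in> E1" for e
      proof -
        obtain x y where "e = {x, y}" using E1form[OF eE1] by blast
        then show ?thesis by (simp add: edge_length_2)
      qed
      have f1: "tree_cost E3 \<le> tree_cost E1"
        unfolding tree_cost_def
      proof (rule sum_mono2[OF finE1])
        show "E3 \<subseteq> E1" using E3(1) unfolding E2_def by blast
        show "\<And>e. e \<in> E1 - E3 \<Longrightarrow> 0 \<le> edge_length e" using nn1 by blast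
      qed
      define S0 where "S0 = sum edge_length ((\<lambda>e. cl ` e) ` E0)"
      define T3 where "T3 = {{p, s}, {s, cl a}, {s, cl b}}"
      have finI: "finite ((\<lambda>e. cl ` e) ` E0)" using finE0 by (rule finite_imageI)
      have finT: "finite T3" by (simp add: T3_def)
      have "tree_cost E1 = S0 + sum edge_length T3 - sum edge_length ((\<lambda>e. cl ` e) ` E0 \<inter> T3)"
        unfolding tree_cost_def E1_def S0_def T3_def[symmetric] by (rule sum_Un[OF finI finT])
      moreover have "0 \<le> sum edge_length ((\<lambda>e. cl ` e) ` E0 \<inter> T3)"
      proof (rule sum_nonneg)
        fix e assume "e \<in> (\<lambda>e. cl ` e) ` E0 \<inter> T3"
        then have "e \<in> E1" unfolding E1_def T3_def by blast
        then show "0 \<le> edge_length e" by (rule nn1)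
      qed
      ultimately have f2: "tree_cost E1 \<le> S0 + sum edge_length T3" by linarith
      have f3: "sum edge_length T3 \<le> dist p s + dist s (cl a) + dist s (cl b)"
      proof -
        have "sum edge_length T3 \<le> edge_length {p, s} + sum edge_length {{s, cl a}, {s, cl b}}"
          unfolding T3_def by (rule sum_insert_le) (simp_all add: edge_length_2)
        moreover have "sum edge_length {{s, cl a}, {s, cl b}} \<le> edge_length {s, cl a} + sum edge_length {{s, cl b}}"
          by (rule sum_insert_le) (simp_all add: edge_length_2)
        ultimately show ?thesis by (simp add: edge_length_2)
      qed
      have f4: "S0 \<le> sum (edge_length \<circ> (\<lambda>e. cl ` e)) E0"
        unfolding S0_def
      proof (rule sum_image_le[OF finE0])
        fix e assume "e \<in> E0"
        then have "cl ` e \<in> E1" unfolding E1_def by blast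
        then show "0 \<le> edge_length (cl ` e)" by (rule nn1)
      qed
      have f5: "sum (edge_length \<circ> (\<lambda>e. cl ` e)) E0 \<le> sum edge_length E0"
      proof (rule sum_mono)
        fix e assume "e \<in> E0"
        then obtain x y where "e = {x, y}" using E0form by blast
        then show "(edge_length \<circ> (\<lambda>e. cl ` e)) e \<le> edge_length e"
          using cldist[of x y] by (simp add: edge_length_2)
      qed
      have f6: "sum edge_length E0 = tree_cost E - dist p a - dist p b"
      proof -
        have sub: "{{p, a}, {p, b}} \<subseteq> E" using paE pbE by blast
        have "sum edge_length E0 = tree_cost E - sum edge_length {{p, a}, {p, b}}"
          unfolding E0_def tree_cost_def by (rule sum_diff[OF finE sub])
        moreover have "sum edge_length {{p, a}, {p, b}} = dist p a + dist p b"
          using ab by (simp add: edge_length_2)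
        ultimately show ?thesis by simp
      qed
      have "tree_cost E3 \<le> tree_cost E - dist p a - dist p b + (dist p s + dist s (cl a) + dist s (cl b))"
        using f1 f2 f3 f4 f5 f6 by linarith
      then show False using ineq z ds1 ds2 ds3 by linarith
    qed
  qed
  then show "degree E p = 1" using deg1 by simp
qed

end
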